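(* Let $n\ge2$ and let $u=x_0+h_1x_1+\cdots+h_{n-1}x_{n-1}$ be a polar $n$-complex number with $v_+>0$, with $v_->0$ if $n$ is even, and with $\rho_k>0$ for all $k=1,\dots,\lfloor(n-1)/2\rfloor$. Then $$u=\exp\Big[e_+\ln v_++e_-\ln v_-+\sum_{k=1}^{n/2-1}\big(e_k\ln\rho_k+\tilde e_k\phi_k\big)\Big]\quad(n\text{ even}),$$ $$u=\exp\Big[e_+\ln v_++\sum_{k=1}^{(n-1)/2}\big(e_k\ln\rho_k+\tilde e_k\phi_k\big)\Big]\quad(n\text{ odd}),$$ where $\exp w=\sum_{j\ge0}w^j/j!$. Equivalently, $u=\big(e_+v_++e_-v_-+\sum_{k}e_k\rho_k\big)\exp\big(\sum_k\tilde e_k\phi_k\big)$ (the $e_-$ term present only for even $n$).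
   Context: Polar $n$-complex numbers: $u=x_0+h_1x_1+\cdots+h_{n-1}x_{n-1}$, $x_j\in\mathbb{R}$, $h_0=1$, with componentwise addition and bilinear multiplication $h_jh_k=h_{(j+k)\bmod n}$. Canonical variables: $v_+=\sum_px_p$; for even $n$, $v_-=\sum_p(-1)^px_p$; for $k=1,\dots,\lfloor(n-1)/2\rfloor$, $v_k=\sum_px_p\cos(2\pi kp/n)$, $\tilde v_k=\sum_px_p\sin(2\pi kp/n)$, $\rho_k=\sqrt{v_k^2+\tilde v_k^2}$, and (for $\rho_k>0$) $\phi_k\in[0,2\pi)$ with $\cos\phi_k=v_k/\rho_k$, $\sin\phi_k=\tilde v_k/\rho_k$. Canonical base: $e_+=\frac1n\sum_{p=0}^{n-1}h_p$; for even $n$, $e_-=\frac1n\sum_{p=0}^{n-1}(-1)^ph_p$; $e_k=\frac2n\sum_{p=0}^{n-1}\cos(2\pi kp/n)h_p$, $\tilde e_k=\frac2n\sum_{p=0}^{n-1}\sin(2\pi kp/n)h_p$ for $k=1,\dots,\lfloor(n-1)/2\rfloor$. *)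

theory Defs
  imports Complex_Main
begin

text \<open>Polar n-complex numbers are represented as coefficient functions
  x :: nat \<Rightarrow> real, where only the values x 0, ..., x (n-1) are meaningful
  (u = x 0 + h_1 x 1 + ... + h_{n-1} x (n-1)).\<close>

definition pc_one :: "nat \<Rightarrow> (nat \<Rightarrow> real)" where
  "pc_one n = (\<lambda>p. if p = 0 then 1 else 0)"

text \<open>Multiplication from h_j h_k = h_{(j+k) mod n}, extended bilinearly.\<close>
definition pc_mult :: "nat \<Rightarrow> (nat \<Rightarrow> real) \<Rightarrow> (nat \<Rightarrow> real) \<Rightarrow> (nat \<Rightarrow> real)" where
  "pc_mult n a b = (\<lambda>r. \<Sum>j<n. \<Sum>k<n. if (j + k) mod n = r then a j * b k else 0)"

fun pc_pow :: "nat \<Rightarrow> (nat \<Rightarrow> real) \<Rightarrow> nat \<Rightarrow> (nat \<Rightarrow> real)" where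
  "pc_pow n w 0 = pc_one n"
| "pc_pow n w (Suc j) = pc_mult n (pc_pow n w j) w"

definition pc_exp :: "nat \<Rightarrow> (nat \<Rightarrow> real) \<Rightarrow> (nat \<Rightarrow> real)" where
  "pc_exp n w = (\<lambda>p. \<Sum>j. pc_pow n w j p / fact j)"

definition v_plus :: "nat \<Rightarrow> (nat \<Rightarrow> real) \<Rightarrow> real" where
  "v_plus n x = (\<Sum>p<n. x p)"

definition v_minus :: "nat \<Rightarrow> (nat \<Rightarrow> real) \<Rightarrow> real" where
  "v_minus n x = (\<Sum>p<n. (-1) ^ p * x p)"

definition v_k :: "nat \<Rightarrow> nat \<Rightarrow> (nat \<Rightarrow> real) \<Rightarrow> real" where
  "v_k n k x = (\<Sum>p<n. x p * cos (2 * pi * real k * real p / real n))"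

definition vt_k :: "nat \<Rightarrow> nat \<Rightarrow> (nat \<Rightarrow> real) \<Rightarrow> real" where
  "vt_k n k x = (\<Sum>p<n. x p * sin (2 * pi * real k * real p / real n))"

definition rho_k :: "nat \<Rightarrow> nat \<Rightarrow> (nat \<Rightarrow> real) \<Rightarrow> real" where
  "rho_k n k x = sqrt ((v_k n k x)\<^sup>2 + (vt_k n k x)\<^sup>2)"

definition phi_k :: "nat \<Rightarrow> nat \<Rightarrow> (nat \<Rightarrow> real) \<Rightarrow> real" where
  "phi_k n k x = (THE \<phi>. 0 \<le> \<phi> \<and> \<phi> < 2 * pi \<and>
      cos \<phi> = v_k n k x / rho_k n k x \<and> sin \<phi> = vt_k n k x / rho_k n k x)"

definition e_plus :: "nat \<Rightarrow> (nat \<Rightarrow> real)" where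
  "e_plus n = (\<lambda>p. 1 / real n)"

definition e_minus :: "nat \<Rightarrow> (nat \<Rightarrow> real)" where
  "e_minus n = (\<lambda>p. (-1) ^ p / real n)"

definition e_k :: "nat \<Rightarrow> nat \<Rightarrow> (nat \<Rightarrow> real)" where
  "e_k n k = (\<lambda>p. 2 / real n * cos (2 * pi * real k * real p / real n))"

definition et_k :: "nat \<Rightarrow> nat \<Rightarrow> (nat \<Rightarrow> real)" where
  "et_k n k = (\<lambda>p. 2 / real n * sin (2 * pi * real k * real p / real n))"

end

theory Submission
  imports Defs
begin


definition chi :: "nat \<Rightarrow> nat \<Rightarrow> (nat \<Rightarrow> real) \<Rightarrow> complex" where
  "chi n j w = (\<Sum>p<n. complex_of_real (w p) * cis (2*pi*real j*real p/real n))"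

lemma cis_int_period: "cis (a + 2*pi*of_int t) = cis a"
proof -
  have "cis (a + 2*pi*of_int t) = cis a * cis (2*pi*of_int t)" by (rule cis_mult[symmetric])
  also have "cis (2*pi*of_int t) = 1" by (rule cis_multiple_2pi) simp
  finally show ?thesis by simp
qed

lemma cis_2pi_int: "cis (2 * (pi * real_of_int t)) = 1"
proof -
  have "cis (2*pi*of_int t) = 1" by (rule cis_multiple_2pi) simp
  then show ?thesis by (metis mult.assoc)
qed

lemma cis_mod:
  assumes "n > 0"
  shows "cis (2*pi*real j*real (m mod n)/real n) = cis (2*pi*real j*real m/real n)"
proof -
  have m: "real m = real (m mod n) + real n * real (m div n)"
    by (metis of_nat_add of_nat_mult mod_div_mult_eq add.commute mult.commute)
  have "2*pi*real j*real m/real n = 2*pi*real j*real (m mod n)/real n + 2*pi*of_int (int (j * (m div n)))"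
    using assms by (simp add: m field_simps)
  then show ?thesis using cis_int_period by metis
qed

lemma geo_cis:
  assumes "n > 0"
  shows "(\<Sum>p<n. cis (2*pi*of_int m*real p/real n)) = (if int n dvd m then of_nat n else 0)"
proof -
  define z where "z = cis (2*pi*of_int m/real n)"
  have zp: "cis (2*pi*of_int m*real p/real n) = z^p" for p
    by (simp add: z_def DeMoivre field_simps)
  have zn: "z^n = 1"
    using assms by (simp add: z_def DeMoivre)
  show ?thesis
  proof (cases "int n dvd m")
    case True
    then obtain t where t: "m = int n * t" by blast
    have "z = 1" using assms by (simp add: z_def t cis_2pi_int)
    then show ?thesis using True by (simp add: zp)
  next
    case False
    have "z \<noteq> 1"
    proof
      assume "z = 1"
      then have "sin (2*pi*of_int m/real n) = sin 0 \<and> cos (2*pi*of_int m/real n) = cos 0"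
        by (simp add: z_def complex_eq_iff)
      then obtain t :: int where "2*pi*of_int m/real n = 0 + 2*pi*t"
        using sin_cos_eq_iff by blast
      then have "of_int m = real n * of_int t" using assms by (simp add: field_simps)
      then have "m = int n * t" by (metis of_int_eq_iff of_int_mult of_int_of_nat_eq)
      then show False using False by simp
    qed
    then show ?thesis using False by (simp add: zp sum_gp_strict zn)
  qed
qed

lemma chi_mult:
  assumes "n > 0"
  shows "chi n j (pc_mult n a b) = chi n j a * chi n j b"
proof -
  let ?c = "\<lambda>m. cis (2*pi*real j*real m/real n)"
  have "chi n j (pc_mult n a b) = (\<Sum>r<n. \<Sum>i<n. \<Sum>k<n.
      (if (i + k) mod n = r then complex_of_real (a i * b k) * ?c r else 0))"
    unfolding chi_def pc_mult_def sum_distrib_right of_real_sum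
    by (intro sum.cong refl) simp
  also have "\<dots> = (\<Sum>i<n. \<Sum>k<n. \<Sum>r<n.
      (if (i + k) mod n = r then complex_of_real (a i * b k) * ?c r else 0))"
    by (subst sum.swap) (rule sum.cong[OF refl], rule sum.swap)
  also have "\<dots> = (\<Sum>i<n. \<Sum>k<n. complex_of_real (a i * b k) * ?c ((i+k) mod n))"
    using assms by (simp add: sum.delta)
  also have "\<dots> = (\<Sum>i<n. \<Sum>k<n. (complex_of_real (a i) * ?c i) * (complex_of_real (b k) * ?c k))"
    using assms by (intro sum.cong refl) (simp add: cis_mod cis_mult distrib_left add_divide_distrib)
  also have "\<dots> = chi n j a * chi n j b"
    unfolding chi_def by (simp add: sum_product)
  finally show ?thesis .
qed

lemma chi_one: "n > 0 \<Longrightarrow> chi n j (pc_one n) = 1"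
proof -
  assume n: "n > 0"
  have "chi n j (pc_one n) = (\<Sum>p<n. if p = 0 then cis (2*pi*real j*real p/real n) else 0)"
    unfolding chi_def pc_one_def by (intro sum.cong refl) simp
  also have "\<dots> = 1" using n by (simp add: sum.delta)
  finally show ?thesis .
qed

lemma chi_pow: "n > 0 \<Longrightarrow> chi n j (pc_pow n w m) = chi n j w ^ m"
  by (induction m) (simp_all add: chi_one chi_mult)

definition pnorm :: "nat \<Rightarrow> (nat \<Rightarrow> real) \<Rightarrow> real" where
  "pnorm n w = (\<Sum>p<n. \<bar>w p\<bar>)"

lemma pnorm_mult: "pnorm n (pc_mult n a b) \<le> pnorm n a * pnorm n b"
proof -
  have "pnorm n (pc_mult n a b) \<le> (\<Sum>r<n. \<Sum>i<n. \<Sum>k<n. if (i + k) mod n = r then \<bar>a i\<bar> * \<bar>b k\<bar> else 0)"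
    unfolding pnorm_def pc_mult_def
  proof (intro sum_mono)
    fix r assume "r \<in> {..<n}"
    have "\<bar>\<Sum>i<n. \<Sum>k<n. if (i + k) mod n = r then a i * b k else 0\<bar>
        \<le> (\<Sum>i<n. \<bar>\<Sum>k<n. if (i + k) mod n = r then a i * b k else 0\<bar>)" by (rule sum_abs)
    also have "\<dots> \<le> (\<Sum>i<n. \<Sum>k<n. \<bar>if (i + k) mod n = r then a i * b k else 0\<bar>)"
      by (intro sum_mono sum_abs)
    also have "\<dots> = (\<Sum>i<n. \<Sum>k<n. if (i + k) mod n = r then \<bar>a i\<bar> * \<bar>b k\<bar> else 0)"
      by (intro sum.cong refl) (simp add: abs_mult)
    finally show "\<bar>\<Sum>i<n. \<Sum>k<n. if (i + k) mod n = r then a i * b k else 0\<bar>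
        \<le> (\<Sum>i<n. \<Sum>k<n. if (i + k) mod n = r then \<bar>a i\<bar> * \<bar>b k\<bar> else 0)" .
  qed
  also have "\<dots> = (\<Sum>i<n. \<Sum>k<n. \<Sum>r<n. if (i + k) mod n = r then \<bar>a i\<bar> * \<bar>b k\<bar> else 0)"
    by (subst sum.swap) (rule sum.cong[OF refl], rule sum.swap)
  also have "\<dots> \<le> (\<Sum>i<n. \<Sum>k<n. \<bar>a i\<bar> * \<bar>b k\<bar>)"
    by (intro sum_mono) (simp add: sum.delta)
  also have "\<dots> = pnorm n a * pnorm n b"
    unfolding pnorm_def by (simp add: sum_product)
  finally show ?thesis .
qed

lemma pnorm_nonneg: "pnorm n w \<ge> 0"
  unfolding pnorm_def by (simp add: sum_nonneg)

lemma pnorm_pow: "n > 0 \<Longrightarrow> pnorm n (pc_pow n w m) \<le> pnorm n w ^ m"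
proof (induction m)
  case 0
  then show ?case by (simp add: pnorm_def pc_one_def sum.delta)
next
  case (Suc m)
  have "pnorm n (pc_pow n w (Suc m)) \<le> pnorm n (pc_pow n w m) * pnorm n w"
    by (simp add: pnorm_mult)
  also have "\<dots> \<le> pnorm n w ^ m * pnorm n w"
    using Suc by (intro mult_right_mono pnorm_nonneg) simp
  finally show ?case by (simp add: mult.commute)
qed

lemma comp_le_pnorm: "p < n \<Longrightarrow> \<bar>w p\<bar> \<le> pnorm n w"
  unfolding pnorm_def by (rule member_le_sum) auto

lemma pc_pow_summable:
  assumes "n > 0" "p < n"
  shows "summable (\<lambda>j. pc_pow n w j p / fact j)"
proof (rule summable_comparison_test')
  show "summable (\<lambda>j. pnorm n w ^ j / fact j)"
    using summable_exp_generic[of "pnorm n w"] by (simp add: divide_inverse mult.commute)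
  fix j :: nat
  have "\<bar>pc_pow n w j p\<bar> \<le> pnorm n w ^ j"
    using comp_le_pnorm[OF assms(2)] pnorm_pow[OF assms(1)] order_trans by blast
  then show "norm (pc_pow n w j p / fact j) \<le> pnorm n w ^ j / fact j"
    by (simp add: divide_right_mono)
qed

lemma chi_exp:
  assumes "n > 0"
  shows "chi n j (pc_exp n w) = exp (chi n j w)"
proof -
  let ?c = "\<lambda>p. cis (2*pi*real j*real p/real n)"
  have "(\<lambda>m. \<Sum>p<n. complex_of_real (pc_pow n w m p / fact m) * ?c p) sums chi n j (pc_exp n w)"
    unfolding chi_def pc_exp_def
  proof (rule sums_sum)
    fix p assume "p \<in> {..<n}"
    then have "(\<lambda>m. pc_pow n w m p / fact m) sums (\<Sum>m. pc_pow n w m p / fact m)"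
      using pc_pow_summable assms by (simp add: summable_sums)
    then have "(\<lambda>m. complex_of_real (pc_pow n w m p / fact m)) sums complex_of_real (\<Sum>m. pc_pow n w m p / fact m)"
      by (rule sums_of_real)
    then show "(\<lambda>m. complex_of_real (pc_pow n w m p / fact m) * ?c p) sums (complex_of_real (\<Sum>m. pc_pow n w m p / fact m) * ?c p)"
      by (rule sums_mult2)
  qed
  moreover have "(\<lambda>m. \<Sum>p<n. complex_of_real (pc_pow n w m p / fact m) * ?c p) = (\<lambda>m. chi n j w ^ m /\<^sub>R fact m)"
  proof
    fix m
    have "(\<Sum>p<n. complex_of_real (pc_pow n w m p / fact m) * ?c p) = chi n j (pc_pow n w m) / fact m"
      unfolding chi_def by (simp add: sum_divide_distrib)
    then show "(\<Sum>p<n. complex_of_real (pc_pow n w m p / fact m) * ?c p) = chi n j w ^ m /\<^sub>R fact m"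
      using chi_pow[OF assms] by (simp add: scaleR_conv_of_real divide_inverse mult.commute)
  qed
  ultimately have "(\<lambda>m. chi n j w ^ m /\<^sub>R fact m) sums chi n j (pc_exp n w)" by simp
  from sums_unique2[OF this exp_converges] show ?thesis .
qed

lemma cis_prod_int: "cis (2*pi*real k*real p/real n) * cis (2*pi*real j*real p/real n)
   = cis (2*pi*of_int (int k + int j)*real p/real n)"
  by (simp add: cis_mult add_divide_distrib distrib_left distrib_right)

lemma cis_prod_int2: "cis (- (2*pi*real k*real p/real n)) * cis (2*pi*real j*real p/real n)
   = cis (2*pi*of_int (int j - int k)*real p/real n)"
  by (simp add: cis_mult diff_divide_distrib left_diff_distrib right_diff_distrib)

lemma chi_inversion:
  assumes "n > 0" "p < n"
  shows "(\<Sum>k<n. chi n k a * cis (- (2*pi*real k*real p/real n))) = of_nat n * complex_of_real (a p)"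
proof -
  have "(\<Sum>k<n. chi n k a * cis (- (2*pi*real k*real p/real n)))
      = (\<Sum>k<n. \<Sum>q<n. complex_of_real (a q) * cis (2*pi*of_int (int q - int p)*real k/real n))"
    unfolding chi_def sum_distrib_right
  proof (intro sum.cong refl)
    fix k q
    have "cis (2*pi*real k*real q/real n) * cis (- (2*pi*real k*real p/real n))
       = cis (2*pi*of_int (int q - int p)*real k/real n)"
      by (simp add: cis_mult diff_divide_distrib left_diff_distrib right_diff_distrib mult.commute mult.left_commute)
    then show "complex_of_real (a q) * cis (2*pi*real k*real q/real n) * cis (- (2*pi*real k*real p/real n))
       = complex_of_real (a q) * cis (2*pi*of_int (int q - int p)*real k/real n)"
      by (simp add: mult.assoc)
  qed
  also have "\<dots> = (\<Sum>q<n. complex_of_real (a q) * (\<Sum>k<n. cis (2*pi*of_int (int q - int p)*real k/real n)))"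
    by (subst sum.swap) (simp add: sum_distrib_left)
  also have "\<dots> = (\<Sum>q<n. if q = p then complex_of_real (a q) * of_nat n else 0)"
  proof (intro sum.cong refl)
    fix q assume q: "q \<in> {..<n}"
    have "int n dvd (int q - int p) \<longleftrightarrow> q = p"
    proof
      assume d: "int n dvd (int q - int p)"
      have "\<bar>int q - int p\<bar> < int n" using q assms by auto
      then have "int q - int p = 0" using d dvd_imp_le_int[of "int q - int p" "int n"]
        by force
      then show "q = p" by simp
    qed simp
    then have "(\<Sum>k<n. cis (2*pi*of_int (int q - int p)*real k/real n)) = (if q = p then of_nat n else 0)"
      by (simp only: geo_cis[OF assms(1)])
    then show "complex_of_real (a q) * (\<Sum>k<n. cis (2*pi*of_int (int q - int p)*real k/real n))
        = (if q = p then complex_of_real (a q) * of_nat n else 0)"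
      by simp
  qed
  also have "\<dots> = of_nat n * complex_of_real (a p)"
    using assms by (simp add: sum.delta mult.commute)
  finally show ?thesis .
qed

lemma chi_inj:
  assumes "n > 0" "\<And>j. j < n \<Longrightarrow> chi n j a = chi n j b" "p < n"
  shows "a p = b p"
proof -
  have "of_nat n * complex_of_real (a p) = of_nat n * complex_of_real (b p)"
    using chi_inversion[OF assms(1,3), of a] chi_inversion[OF assms(1,3), of b] assms(2)
    by (metis (no_types, lifting) lessThan_iff sum.cong)
  then show ?thesis using assms(1) by simp
qed

lemma chi_conj:
  assumes "j \<le> n" "n > 0"
  shows "chi n (n - j) w = cnj (chi n j w)"
  unfolding chi_def cnj_sum
proof (intro sum.cong refl)
  fix p
  have "2*pi*real (n - j)*real p/real n = - (2*pi*real j*real p/real n) + 2*pi*of_int (int (p))"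
    using assms by (simp add: of_nat_diff field_simps)
  then have "cis (2*pi*real (n - j)*real p/real n) = cis (- (2*pi*real j*real p/real n))"
    by (simp only: cis_int_period)
  then show "complex_of_real (w p) * cis (2*pi*real (n - j)*real p/real n)
      = cnj (complex_of_real (w p) * cis (2*pi*real j*real p/real n))"
    by (simp add: cis_int_period cis_cnj)
qed

lemma chi_inj_half:
  assumes "n > 0" "\<And>j. 2 * j \<le> n \<Longrightarrow> chi n j a = chi n j b" "p < n"
  shows "a p = b p"
proof (rule chi_inj[OF assms(1) _ assms(3)])
  fix j assume j: "j < n"
  show "chi n j a = chi n j b"
  proof (cases "2 * j \<le> n")
    case True then show ?thesis using assms(2) by simp
  next
    case False
    then have "2 * (n - j) \<le> n" by simp
    then have "chi n (n - j) a = chi n (n - j) b" using assms(2) by simp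
    then have "cnj (chi n (n - (n - j)) a) = cnj (chi n (n - (n - j)) b)"
      using chi_conj[of "n - j" n] assms(1) by simp
    then show ?thesis using j by simp
  qed
qed

lemma chi_add: "chi n j (\<lambda>q. f q + g q) = chi n j f + chi n j g"
  unfolding chi_def by (simp add: sum.distrib distrib_right)

lemma chi_scale: "chi n j (\<lambda>q. f q * c) = chi n j f * of_real c"
  unfolding chi_def sum_distrib_right by (intro sum.cong refl) (simp add: mult_ac)

lemma chi_zero: "chi n j (\<lambda>q. 0) = 0"
  unfolding chi_def by simp

lemma chi_sum: "chi n j (\<lambda>q. \<Sum>k\<in>K. f k q) = (\<Sum>k\<in>K. chi n j (f k))"
  unfolding chi_def of_real_sum sum_distrib_right by (rule sum.swap)

lemma dvd_small: "\<bar>m\<bar> < int n \<Longrightarrow> int n dvd m \<longleftrightarrow> m = 0"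
  using dvd_imp_le_int[of m "int n"] by force

lemma G_lin:
  assumes "n > 0"
  shows "(\<Sum>p<n. complex_of_real (1 / real n) * cis (2*pi*of_int m*real p/real n))
     = (if int n dvd m then 1 else 0)"
proof -
  have "(\<Sum>p<n. complex_of_real (1 / real n) * cis (2*pi*of_int m*real p/real n))
     = complex_of_real (1 / real n) * (\<Sum>p<n. cis (2*pi*of_int m*real p/real n))"
    by (simp only: sum_distrib_left)
  also have "\<dots> = (if int n dvd m then 1 else 0)"
    by (simp only: geo_cis[OF assms]) (use assms in simp)
  finally show ?thesis .
qed

lemma chi_e_plus:
  assumes "n > 0" "j < n"
  shows "chi n j (e_plus n) = (if j = 0 then 1 else 0)"
proof -
  have "chi n j (e_plus n) = (\<Sum>p<n. complex_of_real (1 / real n) * cis (2*pi*of_int (int j)*real p/real n))"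
    unfolding chi_def e_plus_def by simp
  also have "\<dots> = (if int n dvd int j then 1 else 0)" by (rule G_lin[OF assms(1)])
  also have "\<dots> = (if j = 0 then 1 else 0)" using assms dvd_small[of "int j" n] by simp
  finally show ?thesis .
qed

lemma cis_npi: "cis (real p * pi) = (-1) ^ p"
  using DeMoivre[of pi p] by simp

lemma chi_e_minus:
  assumes "n > 0" "even n" "2 * j \<le> n"
  shows "chi n j (e_minus n) = (if 2 * j = n then 1 else 0)"
proof -
  have "chi n j (e_minus n) = (\<Sum>p<n. complex_of_real (1 / real n) *
        cis (2*pi*of_int (int (n div 2) + int j)*real p/real n))"
    unfolding chi_def e_minus_def
  proof (intro sum.cong refl)
    fix p
    have h: "2*pi*real (n div 2)*real p/real n = real p * pi"
      using assms by (auto simp: real_of_nat_div field_simps elim!: evenE)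
    have h2: "cis (2*pi*real (n div 2)*real p/real n) = (-1)^p"
      by (simp only: h cis_npi)
    have "complex_of_real ((-1)^p / real n) = complex_of_real (1 / real n) * cis (2*pi*real (n div 2)*real p/real n)"
      unfolding h2 by simp
    then show "complex_of_real ((-1)^p / real n) * cis (2*pi*real j*real p/real n) =
        complex_of_real (1 / real n) * cis (2*pi*of_int (int (n div 2) + int j)*real p/real n)"
      by (metis (no_types) mult.assoc cis_prod_int)
  qed
  also have "\<dots> = (if int n dvd (int (n div 2) + int j) then 1 else 0)" by (rule G_lin[OF assms(1)])
  also have "\<dots> = (if 2 * j = n then 1 else 0)"
  proof -
    have "int n dvd (int (n div 2) + int j) \<longleftrightarrow> int n dvd (int (n div 2) + int j - int n)"
      by (metis add.commute diff_add_cancel dvd_add_right_iff dvd_refl)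
    also have "\<dots> \<longleftrightarrow> int (n div 2) + int j - int n = 0"
      using assms by (intro dvd_small) (auto elim!: evenE)
    also have "\<dots> \<longleftrightarrow> 2 * j = n" using assms by (auto elim!: evenE)
    finally show ?thesis by simp
  qed
  finally show ?thesis .
qed

lemma cos_cis: "complex_of_real (cos t) = (cis t + cis (- t)) / 2"
  by (simp add: complex_eq_iff)

lemma sin_cis: "complex_of_real (sin t) = - \<i> * (cis t - cis (- t)) / 2"
  by (simp add: complex_eq_iff)

lemma cos_alg: "complex_of_real (2 / real n * cos a) * cb = complex_of_real (1 / real n) * (cis a * cb + cis (- a) * cb)"
  by (cases "n = 0") (simp_all add: cos_cis field_simps)

lemma sin_alg: "complex_of_real (2 / real n * sin a) * cb = - \<i> * (complex_of_real (1 / real n) * (cis a * cb) - complex_of_real (1 / real n) * (cis (- a) * cb))"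
  by (cases "n = 0") (simp_all add: sin_cis field_simps)

lemma kj_facts:
  assumes "n > 0" "1 \<le> k" "2 * k < n" "2 * j \<le> n"
  shows "\<not> int n dvd (int k + int j)" "int n dvd (int j - int k) \<longleftrightarrow> j = k"
proof -
  show "\<not> int n dvd (int k + int j)"
    using assms dvd_small[of "int k + int j" n] by simp
  show "int n dvd (int j - int k) \<longleftrightarrow> j = k"
    using assms dvd_small[of "int j - int k" n] by auto
qed

lemma chi_e_k_raw:
  assumes "n > 0"
  shows "chi n j (e_k n k) = (\<Sum>p<n. complex_of_real (1 / real n) * cis (2*pi*of_int (int k + int j)*real p/real n))
      + (\<Sum>p<n. complex_of_real (1 / real n) * cis (2*pi*of_int (int j - int k)*real p/real n))"
  unfolding chi_def e_k_def sum.distrib[symmetric]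
proof (intro sum.cong refl)
  fix p
  let ?a = "2*pi*real k*real p/real n" and ?b = "2*pi*real j*real p/real n"
  have "complex_of_real (2 / real n * cos ?a) * cis ?b = complex_of_real (1 / real n) * (cis ?a * cis ?b + cis (- ?a) * cis ?b)"
    by (rule cos_alg)
  then show "complex_of_real (2 / real n * cos ?a) * cis ?b =
    complex_of_real (1 / real n) * cis (2*pi*of_int (int k + int j)*real p/real n) +
    complex_of_real (1 / real n) * cis (2*pi*of_int (int j - int k)*real p/real n)"
    by (simp only: cis_prod_int cis_prod_int2 distrib_left)
qed

lemma chi_et_k_raw:
  assumes "n > 0"
  shows "chi n j (et_k n k) = - \<i> * ((\<Sum>p<n. complex_of_real (1 / real n) * cis (2*pi*of_int (int k + int j)*real p/real n))
      - (\<Sum>p<n. complex_of_real (1 / real n) * cis (2*pi*of_int (int j - int k)*real p/real n)))"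
  unfolding chi_def et_k_def sum_subtractf[symmetric] sum_distrib_left
proof (intro sum.cong refl)
  fix p
  let ?a = "2*pi*real k*real p/real n" and ?b = "2*pi*real j*real p/real n"
  have "complex_of_real (2 / real n * sin ?a) * cis ?b = - \<i> * (complex_of_real (1 / real n) * (cis ?a * cis ?b) - complex_of_real (1 / real n) * (cis (- ?a) * cis ?b))"
    by (rule sin_alg)
  then show "complex_of_real (2 / real n * sin ?a) * cis ?b =
    - \<i> * (complex_of_real (1 / real n) * cis (2*pi*of_int (int k + int j)*real p/real n) -
    complex_of_real (1 / real n) * cis (2*pi*of_int (int j - int k)*real p/real n))"
    by (simp only: cis_prod_int cis_prod_int2)
qed

lemma chi_e_k:
  assumes "n > 0" "1 \<le> k" "2 * k < n" "2 * j \<le> n"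
  shows "chi n j (e_k n k) = (if j = k then 1 else 0)"
  unfolding chi_e_k_raw[OF assms(1)] G_lin[OF assms(1)] using kj_facts[OF assms] by simp

lemma chi_et_k:
  assumes "n > 0" "1 \<le> k" "2 * k < n" "2 * j \<le> n"
  shows "chi n j (et_k n k) = (if j = k then \<i> else 0)"
  unfolding chi_et_k_raw[OF assms(1)] G_lin[OF assms(1)] using kj_facts[OF assms] by simp

lemma chi_combo:
  assumes "n \<ge> 2" "2 * j \<le> n"
  shows "chi n j (\<lambda>q. e_plus n q * a + (if even n then e_minus n q * b else 0)
      + (\<Sum>k=1..(n - 1) div 2. e_k n k q * c k + et_k n k q * d k))
   = (if j = 0 then complex_of_real a else if even n \<and> 2 * j = n then complex_of_real b
      else if 1 \<le> j \<and> j \<le> (n - 1) div 2 then Complex (c j) (d j) else 0)"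
proof -
  let ?m = "(n - 1) div 2"
  have n0: "n > 0" using assms by simp
  have S: "(\<Sum>k=1..?m. chi n j (\<lambda>q. e_k n k q * c k + et_k n k q * d k))
      = (if 1 \<le> j \<and> j \<le> ?m then Complex (c j) (d j) else 0)"
  proof -
    have "(\<Sum>k=1..?m. chi n j (\<lambda>q. e_k n k q * c k + et_k n k q * d k))
        = (\<Sum>k\<in>{1..?m}. if k = j then Complex (c k) (d k) else 0)"
    proof (intro sum.cong refl)
      fix k assume k: "k \<in> {1..?m}"
      then have k1: "1 \<le> k" and k2: "2 * k < n" by auto
      show "chi n j (\<lambda>q. e_k n k q * c k + et_k n k q * d k) = (if k = j then Complex (c k) (d k) else 0)"
        using chi_e_k[OF n0 k1 k2 assms(2)] chi_et_k[OF n0 k1 k2 assms(2)]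
        by (auto simp: chi_add chi_scale complex_eq_iff)
    qed
    also have "\<dots> = (if 1 \<le> j \<and> j \<le> ?m then Complex (c j) (d j) else 0)"
      by (simp add: sum.delta')
    finally show ?thesis .
  qed
  have P: "chi n j (\<lambda>q. e_plus n q * a) = (if j = 0 then complex_of_real a else 0)"
    using assms by (simp add: chi_scale chi_e_plus)
  show ?thesis
  proof (cases "even n")
    case True
    have M: "chi n j (\<lambda>q. e_minus n q * b) = (if 2 * j = n then complex_of_real b else 0)"
      using assms True n0 by (simp add: chi_scale chi_e_minus)
    have "chi n j (\<lambda>q. e_plus n q * a + (if even n then e_minus n q * b else 0)
      + (\<Sum>k=1..?m. e_k n k q * c k + et_k n k q * d k))
      = chi n j (\<lambda>q. e_plus n q * a) + chi n j (\<lambda>q. e_minus n q * b)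
        + (\<Sum>k=1..?m. chi n j (\<lambda>q. e_k n k q * c k + et_k n k q * d k))"
      using True by (simp add: chi_add chi_sum)
    then show ?thesis using P M S assms by auto
  next
    case False
    have "chi n j (\<lambda>q. e_plus n q * a + (if even n then e_minus n q * b else 0)
      + (\<Sum>k=1..?m. e_k n k q * c k + et_k n k q * d k))
      = chi n j (\<lambda>q. e_plus n q * a)
        + (\<Sum>k=1..?m. chi n j (\<lambda>q. e_k n k q * c k + et_k n k q * d k))"
      using False by (simp add: chi_add chi_sum)
    then show ?thesis using P S assms False by auto
  qed
qed

lemma chi_x: "chi n j x = Complex (v_k n j x) (vt_k n j x)"
  unfolding chi_def v_k_def vt_k_def by (simp add: complex_eq_iff Re_sum Im_sum mult.commute)

lemma chi_x0: "chi n 0 x = complex_of_real (v_plus n x)"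
  unfolding chi_def v_plus_def by (simp add: of_real_sum)

lemma chi_xhalf:
  assumes "even n" "n > 0"
  shows "chi n (n div 2) x = complex_of_real (v_minus n x)"
  unfolding chi_def v_minus_def of_real_sum
proof (intro sum.cong refl)
  fix p
  have h: "2*pi*real (n div 2)*real p/real n = real p * pi"
    using assms by (auto simp: real_of_nat_div field_simps elim!: evenE)
  have h2: "cis (2*pi*real (n div 2)*real p/real n) = (-1)^p"
    by (simp only: h cis_npi)
  show "complex_of_real (x p) * cis (2*pi*real (n div 2)*real p/real n) = complex_of_real ((-1)^p * x p)"
    unfolding h2 by simp
qed

lemma phi_prop:
  assumes "rho_k n k x > 0"
  shows "cos (phi_k n k x) = v_k n k x / rho_k n k x \<and> sin (phi_k n k x) = vt_k n k x / rho_k n k x"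
proof -
  let ?r = "rho_k n k x" and ?v = "v_k n k x" and ?w = "vt_k n k x"
  have r2: "?r^2 = ?v^2 + ?w^2" unfolding rho_k_def by simp
  have "(?v / ?r)^2 + (?w / ?r)^2 = (?v^2 + ?w^2) / ?r^2"
    by (simp add: power_divide add_divide_distrib)
  also have "\<dots> = 1" unfolding r2[symmetric] using assms by simp
  finally have "(?v / ?r)^2 + (?w / ?r)^2 = 1" .
  then obtain t where t: "0 \<le> t" "t < 2*pi" "?v / ?r = cos t" "?w / ?r = sin t"
    by (rule sincos_total_2pi)
  have "phi_k n k x = t"
    unfolding phi_k_def
  proof (rule the_equality)
    show "0 \<le> t \<and> t < 2 * pi \<and> cos t = ?v / ?r \<and> sin t = ?w / ?r" using t by simp
    fix s assume s: "0 \<le> s \<and> s < 2 * pi \<and> cos s = ?v / ?r \<and> sin s = ?w / ?r"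
    then have "sin s = sin t \<and> cos s = cos t" using t by simp
    then obtain m :: int where m: "s = t + 2 * pi * m" using sin_cos_eq_iff by blast
    have "m = 0"
    proof -
      have "2 * pi * m < 2 * pi * 1" using m s t by linarith
      then have "m < 1" by (simp add: mult_less_cancel_left)
      moreover have "pi * (-1) < pi * m" using m s t by linarith
      then have "(-1::real) < of_int m" using pi_gt_zero mult_less_cancel_left_pos by blast
      then have "-1 < m" by simp
      ultimately show ?thesis by simp
    qed
    then show "s = t" using m by simp
  qed
  then show ?thesis using t by simp
qed

lemma polar_x:
  assumes "rho_k n k x > 0"
  shows "exp (Complex (ln (rho_k n k x)) (phi_k n k x)) = chi n k x"
    and "complex_of_real (rho_k n k x) * exp (Complex 0 (phi_k n k x)) = chi n k x"
  using phi_prop[OF assms] assms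
  by (simp_all add: exp_eq_polar chi_x complex_eq_iff)


theorem mainTheorem9:
  fixes n :: nat and x :: "nat \<Rightarrow> real"
  assumes "n \<ge> 2"
    and "v_plus n x > 0"
    and "even n \<Longrightarrow> v_minus n x > 0"
    and "\<And>k. 1 \<le> k \<Longrightarrow> k \<le> (n - 1) div 2 \<Longrightarrow> rho_k n k x > 0"
  shows "(\<forall>p<n. x p = pc_exp n (\<lambda>q. e_plus n q * ln (v_plus n x)
              + (if even n then e_minus n q * ln (v_minus n x) else 0)
              + (\<Sum>k=1..(n - 1) div 2. e_k n k q * ln (rho_k n k x) + et_k n k q * phi_k n k x)) p)
      \<and> (\<forall>p<n. x p = pc_mult n
              (\<lambda>q. e_plus n q * v_plus n x
                 + (if even n then e_minus n q * v_minus n x else 0)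
                 + (\<Sum>k=1..(n - 1) div 2. e_k n k q * rho_k n k x))
              (pc_exp n (\<lambda>q. \<Sum>k=1..(n - 1) div 2. et_k n k q * phi_k n k x)) p)"
proof -
  let ?m = "(n - 1) div 2"
  have n0: "n > 0" using assms(1) by simp
  have cases: "j = 0 \<or> (even n \<and> 2 * j = n) \<or> (1 \<le> j \<and> j \<le> ?m)" if "2 * j \<le> n" for j
    using that by presburger
  define W where "W = (\<lambda>q. e_plus n q * ln (v_plus n x)
              + (if even n then e_minus n q * ln (v_minus n x) else 0)
              + (\<Sum>k=1..(n - 1) div 2. e_k n k q * ln (rho_k n k x) + et_k n k q * phi_k n k x))"
  have part1: "x p = pc_exp n W p" if p: "p < n" for p
  proof (rule chi_inj_half[OF n0 _ p])
    fix j assume j: "2 * j \<le> n"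
    have cW: "chi n j W = (if j = 0 then complex_of_real (ln (v_plus n x)) else if even n \<and> 2 * j = n then complex_of_real (ln (v_minus n x))
      else if 1 \<le> j \<and> j \<le> ?m then Complex (ln (rho_k n j x)) (phi_k n j x) else 0)"
      unfolding W_def by (rule chi_combo[OF assms(1) j])
    have e: "chi n j (pc_exp n W) = exp (chi n j W)" by (rule chi_exp[OF n0])
    show "chi n j x = chi n j (pc_exp n W)"
      using cases[OF j]
    proof (elim disjE conjE)
      assume "j = 0" then show ?thesis using e cW assms(2) by (simp add: chi_x0 exp_of_real)
    next
      assume h: "even n" "2 * j = n"
      then have "j = n div 2" by simp
      then show ?thesis using e cW assms(3)[OF h(1)] h n0 by (simp add: chi_xhalf exp_of_real)
    next
      assume h: "1 \<le> j" "j \<le> ?m"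
      have c1: "(even n \<and> 2 * j = n) = False" "(j = 0) = False" "(1 \<le> j \<and> j \<le> ?m) = True"
        using h by auto
      have "chi n j W = Complex (ln (rho_k n j x)) (phi_k n j x)"
        unfolding cW c1 if_False if_True ..
      then show ?thesis using e polar_x(1)[OF assms(4)[OF h]] by simp
    qed
  qed
  define A where "A = (\<lambda>q. e_plus n q * v_plus n x
                 + (if even n then e_minus n q * v_minus n x else 0)
                 + (\<Sum>k=1..(n - 1) div 2. e_k n k q * rho_k n k x))"
  define D where "D = (\<lambda>q. \<Sum>k=1..(n - 1) div 2. et_k n k q * phi_k n k x)"
  have A': "A = (\<lambda>q. e_plus n q * v_plus n x
                 + (if even n then e_minus n q * v_minus n x else 0)
                 + (\<Sum>k=1..(n - 1) div 2. e_k n k q * rho_k n k x + et_k n k q * 0))"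
    unfolding A_def by simp
  have D': "D = (\<lambda>q. e_plus n q * 0
                 + (if even n then e_minus n q * 0 else 0)
                 + (\<Sum>k=1..(n - 1) div 2. e_k n k q * 0 + et_k n k q * phi_k n k x))"
    unfolding D_def by (simp add: fun_eq_iff)
  have part2: "x p = pc_mult n A (pc_exp n D) p" if p: "p < n" for p
  proof (rule chi_inj_half[OF n0 _ p])
    fix j assume j: "2 * j \<le> n"
    have cA: "chi n j A = (if j = 0 then complex_of_real (v_plus n x) else if even n \<and> 2 * j = n then complex_of_real (v_minus n x)
      else if 1 \<le> j \<and> j \<le> ?m then Complex (rho_k n j x) 0 else 0)"
      unfolding A' by (rule chi_combo[OF assms(1) j])
    have cD: "chi n j D = (if j = 0 then 0 else if even n \<and> 2 * j = n then 0
      else if 1 \<le> j \<and> j \<le> ?m then Complex 0 (phi_k n j x) else 0)"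
    proof -
      have "chi n j D = (if j = 0 then complex_of_real 0 else if even n \<and> 2 * j = n then complex_of_real 0
        else if 1 \<le> j \<and> j \<le> ?m then Complex ((\<lambda>_. 0) j) (phi_k n j x) else 0)"
        unfolding D' by (rule chi_combo[OF assms(1) j])
      then show ?thesis by simp
    qed
    have e: "chi n j (pc_mult n A (pc_exp n D)) = chi n j A * exp (chi n j D)"
      by (simp add: chi_mult[OF n0] chi_exp[OF n0])
    show "chi n j x = chi n j (pc_mult n A (pc_exp n D))"
      using cases[OF j]
    proof (elim disjE conjE)
      assume "j = 0" then show ?thesis using e cA cD by (simp add: chi_x0)
    next
      assume h: "even n" "2 * j = n"
      then have "j = n div 2" by simp
      then show ?thesis using e cA cD h n0 by (simp add: chi_xhalf)
    next
      assume h: "1 \<le> j" "j \<le> ?m"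
      have c1: "(even n \<and> 2 * j = n) = False" "(j = 0) = False" "(1 \<le> j \<and> j \<le> ?m) = True"
        using h by auto
      have "chi n j A = Complex (rho_k n j x) 0" "chi n j D = Complex 0 (phi_k n j x)"
        unfolding cA cD c1 if_False if_True by simp_all
      then show ?thesis using e polar_x(2)[OF assms(4)[OF h]]
        by (simp add: complex_of_real_def)
    qed
  qed
  show ?thesis using part1 part2 unfolding W_def A_def D_def by blast
qed

end
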